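(* Let $\mathcal V$ be a finite set, $2\le k\le|\mathcal V|-2$, let $\Gamma\subset\binom{\mathcal V}{k}$ be a code and let $G\le{\rm Aut}(\Gamma)\cap{\rm Sym}(\mathcal V)$. (a) $\Gamma$ is $G$-strongly incidence-transitive if and only if $\Gamma$ is $G$-incidence-transitive and $\delta(\Gamma)\ge2$. (b) If $\delta(\Gamma)\ge3$ and $\Gamma$ is $G$-neighbour-transitive, then $\Gamma$ is $G$-strongly incidence-transitive. (c) If $G$ is primitive on $\mathcal V$ and $\Gamma$ is $G$-strongly incidence-transitive, then $G$ is $2$-transitive on $\mathcal V$.
   Context: The Johnson graph $J(v,k)$ ($v=|\mathcal V|$) has vertex set $\binom{\mathcal V}{k}$, the $k$-subsets of $\mathcal V$, two being adjacent iff they meet in $k-1$ points; $d$ denotes graph distance. A code is a proper non-empty subset $\Gamma\subset\binom{\mathcal V}{k}$; $\delta(\Gamma)$ is the least distance in $J(v,k)$ between distinct codewords. The neighbour set $\Gamma_1$ is the set of $k$-subsets not in $\Gamma$ at distance $1$ from some codeword. ${\rm Aut}(\Gamma)$ is the setwise stabiliser of $\Gamma$ in ${\rm Aut}(J(v,k))$. For $\alpha\subseteq\mathcal V$, $\overline\alpha=\mathcal V\setminus\alpha$. For $G\le{\rm Aut}(\Gamma)$: $\Gamma$ is $G$-neighbour-transitive if $G$ is transitive on both $\Gamma$ and $\Gamma_1$; $\Gamma$ is $G$-incidence-transitive if $G$ is transitive on the set of pairs $(\gamma,\gamma_1)\in\Gamma\times\Gamma_1$ with $d(\gamma,\gamma_1)=1$.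 For $G\le{\rm Aut}(\Gamma)\cap{\rm Sym}(\mathcal V)$, $\Gamma$ is $G$-strongly incidence-transitive if $G$ is transitive on $\Gamma$ and, for $\gamma\in\Gamma$, the stabiliser $G_\gamma$ is transitive on $\gamma\times\overline\gamma$. *)

theory Defs
  imports "HOL-Algebra.Bij" "HOL-Library.Extended_Nat"
begin

definition ksubsets :: "'a set \<Rightarrow> nat \<Rightarrow> 'a set set" where
  "ksubsets V k = {A. A \<subseteq> V \<and> card A = k}"

definition johnson_edges :: "'a set \<Rightarrow> nat \<Rightarrow> ('a set \<times> 'a set) set" where
  "johnson_edges V k = {(A, B). A \<in> ksubsets V k \<and> B \<in> ksubsets V k \<and> card (A \<inter> B) = k - 1}"

definition jdist :: "'a set \<Rightarrow> nat \<Rightarrow> 'a set \<Rightarrow> 'a set \<Rightarrow> nat" where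
  "jdist V k A B = (LEAST n. (A, B) \<in> (johnson_edges V k) ^^ n)"

definition is_code :: "'a set \<Rightarrow> nat \<Rightarrow> 'a set set \<Rightarrow> bool" where
  "is_code V k \<Gamma> \<longleftrightarrow> \<Gamma> \<noteq> {} \<and> \<Gamma> \<subset> ksubsets V k"

(* minimum distance delta(Gamma); infinity if Gamma has only one codeword *)
definition min_dist :: "'a set \<Rightarrow> nat \<Rightarrow> 'a set set \<Rightarrow> enat" where
  "min_dist V k \<Gamma> = (INF p \<in> {(A, B). A \<in> \<Gamma> \<and> B \<in> \<Gamma> \<and> A \<noteq> B}. enat (jdist V k (fst p) (snd p)))"

definition neighbours :: "'a set \<Rightarrow> nat \<Rightarrow> 'a set set \<Rightarrow> 'a set set" where
  "neighbours V k \<Gamma> = {B \<in> ksubsets V k. B \<notin> \<Gamma> \<and> (\<exists>A \<in> \<Gamma>. jdist V k A B = 1)}"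

definition stabilises_code :: "('a \<Rightarrow> 'a) set \<Rightarrow> 'a set set \<Rightarrow> bool" where
  "stabilises_code G \<Gamma> \<longleftrightarrow> (\<forall>g \<in> G. (\<lambda>A. g ` A) ` \<Gamma> = \<Gamma>)"

definition set_transitive :: "('a \<Rightarrow> 'a) set \<Rightarrow> 'a set set \<Rightarrow> bool" where
  "set_transitive G X \<longleftrightarrow> (\<forall>A \<in> X. \<forall>B \<in> X. \<exists>g \<in> G. g ` A = B)"

definition neighbour_transitive :: "'a set \<Rightarrow> nat \<Rightarrow> ('a \<Rightarrow> 'a) set \<Rightarrow> 'a set set \<Rightarrow> bool" where
  "neighbour_transitive V k G \<Gamma> \<longleftrightarrow>
     set_transitive G \<Gamma> \<and> set_transitive G (neighbours V k \<Gamma>)"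

definition incidence_transitive :: "'a set \<Rightarrow> nat \<Rightarrow> ('a \<Rightarrow> 'a) set \<Rightarrow> 'a set set \<Rightarrow> bool" where
  "incidence_transitive V k G \<Gamma> \<longleftrightarrow>
     (let P = {(A, B). A \<in> \<Gamma> \<and> B \<in> neighbours V k \<Gamma> \<and> jdist V k A B = 1}
      in \<forall>p \<in> P. \<forall>q \<in> P. \<exists>g \<in> G. g ` fst p = fst q \<and> g ` snd p = snd q)"

definition strongly_incidence_transitive :: "'a set \<Rightarrow> ('a \<Rightarrow> 'a) set \<Rightarrow> 'a set set \<Rightarrow> bool" where
  "strongly_incidence_transitive V G \<Gamma> \<longleftrightarrow>
     set_transitive G \<Gamma> \<and>
     (\<forall>A \<in> \<Gamma>. \<forall>a \<in> A. \<forall>b \<in> V - A. \<forall>c \<in> A. \<forall>d \<in> V - A.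
        \<exists>g \<in> G. g ` A = A \<and> g a = c \<and> g b = d)"

definition perm_transitive :: "'a set \<Rightarrow> ('a \<Rightarrow> 'a) set \<Rightarrow> bool" where
  "perm_transitive V G \<longleftrightarrow> (\<forall>a \<in> V. \<forall>b \<in> V. \<exists>g \<in> G. g a = b)"

definition primitive :: "'a set \<Rightarrow> ('a \<Rightarrow> 'a) set \<Rightarrow> bool" where
  "primitive V G \<longleftrightarrow> perm_transitive V G \<and>
     (\<forall>B. B \<subseteq> V \<longrightarrow> B \<noteq> {} \<longrightarrow> (\<forall>g \<in> G. g ` B = B \<or> g ` B \<inter> B = {}) \<longrightarrow>
          card B = 1 \<or> B = V)"

definition two_transitive :: "'a set \<Rightarrow> ('a \<Rightarrow> 'a) set \<Rightarrow> bool" where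
  "two_transitive V G \<longleftrightarrow>
     (\<forall>a \<in> V. \<forall>b \<in> V. \<forall>c \<in> V. \<forall>d \<in> V. a \<noteq> b \<longrightarrow> c \<noteq> d \<longrightarrow>
        (\<exists>g \<in> G. g a = c \<and> g b = d))"

end

theory Submission
  imports Defs
begin

lemma G_Bij: "subgroup G (BijGroup V) \<Longrightarrow> g \<in> G \<Longrightarrow> g \<in> Bij V"
  using subgroup.subset by (fastforce simp: BijGroup_def)

lemma G_bij: "subgroup G (BijGroup V) \<Longrightarrow> g \<in> G \<Longrightarrow> bij_betw g V V"
  using G_Bij by (fastforce simp: Bij_def)

lemma G_comp: "subgroup G (BijGroup V) \<Longrightarrow> g \<in> G \<Longrightarrow> h \<in> G \<Longrightarrow> compose V h g \<in> G"
proof -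
  assume s: "subgroup G (BijGroup V)" and g: "g \<in> G" and h: "h \<in> G"
  have "h \<otimes>\<^bsub>BijGroup V\<^esub> g \<in> G" using subgroup.m_closed[OF s h g] .
  moreover have "h \<otimes>\<^bsub>BijGroup V\<^esub> g = compose V h g"
    using G_Bij[OF s g] G_Bij[OF s h] by (simp add: BijGroup_def)
  ultimately show ?thesis by simp
qed

lemma compose_image: "X \<subseteq> V \<Longrightarrow> compose V h g ` X = h ` g ` X"
  by (auto simp: compose_def image_iff subset_iff)

lemma stab_mem: "stabilises_code G \<Gamma> \<Longrightarrow> g \<in> G \<Longrightarrow> A \<in> \<Gamma> \<Longrightarrow> g ` A \<in> \<Gamma>"
  unfolding stabilises_code_def by blast

lemma stab_pre: "stabilises_code G \<Gamma> \<Longrightarrow> g \<in> G \<Longrightarrow> A \<in> \<Gamma> \<Longrightarrow> \<exists>A0\<in>\<Gamma>. A = g ` A0"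
  unfolding stabilises_code_def by (metis imageE)

lemma E_iff: "(A,B) \<in> johnson_edges V k \<longleftrightarrow> A \<in> ksubsets V k \<and> B \<in> ksubsets V k \<and> card (A \<inter> B) = k - 1"
  by (simp add: johnson_edges_def)

lemma reach:
  assumes "finite V"
  shows "A \<in> ksubsets V k \<Longrightarrow> B \<in> ksubsets V k \<Longrightarrow> n = card (A - B) \<Longrightarrow> (A,B) \<in> johnson_edges V k ^^ n"
proof (induction n arbitrary: A)
  case 0
  have f: "finite A" "finite B" "card A = k" "card B = k" "A \<subseteq> V" "B \<subseteq> V"
    using 0 assms by (auto simp: ksubsets_def intro: finite_subset)
  then have "A - B = {}" using 0(3) by simp
  then have "A \<subseteq> B" by blast
  then have "A = B" using f card_subset_eq by metis
  then show ?case by simp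
next
  case (Suc n)
  have fA: "finite A" and fB: "finite B" using Suc.prems assms by (auto simp: ksubsets_def intro: finite_subset)
  have cA: "card A = k" "card B = k" "A \<subseteq> V" "B \<subseteq> V" using Suc.prems by (auto simp: ksubsets_def)
  obtain x where x: "x \<in> A - B" using Suc.prems(3) by (metis card.empty ex_in_conv nat.distinct(1))
  have "card (B - A) = card (A - B)" using fA fB cA
    by (metis card_Diff_subset_Int finite_Int inf_commute Int_lower1)
  then obtain y where y: "y \<in> B - A" using Suc.prems(3) by (metis card.empty ex_in_conv nat.distinct(1))
  define A' where "A' = insert y (A - {x})"
  have "card A \<ge> 1" using x fA by (metis One_nat_def Suc_leI card_gt_0_iff empty_iff DiffD1)
  then have kA': "A' \<in> ksubsets V k" using x y cA fA by (auto simp: A'_def ksubsets_def card_insert_if)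
  have "A \<inter> A' = A - {x}" using x y by (auto simp: A'_def)
  then have "card (A \<inter> A') = k - 1" using x cA fA by simp
  then have e: "(A, A') \<in> johnson_edges V k" using Suc.prems(1) kA' by (simp add: E_iff)
  have "A' - B = (A - B) - {x}" using x y by (auto simp: A'_def)
  then have "card (A' - B) = n" using Suc.prems(3) x fA by simp
  then have "(A', B) \<in> johnson_edges V k ^^ n" using Suc.IH[OF kA' Suc.prems(2)] by simp
  then show ?case using e by (metis relpow_Suc_I2)
qed

lemma reach_ex: "finite V \<Longrightarrow> A \<in> ksubsets V k \<Longrightarrow> B \<in> ksubsets V k \<Longrightarrow> \<exists>n. (A,B) \<in> johnson_edges V k ^^ n"
  using reach by blast

lemma jdist_reach: "finite V \<Longrightarrow> A \<in> ksubsets V k \<Longrightarrow> B \<in> ksubsets V k \<Longrightarrow> (A,B) \<in> johnson_edges V k ^^ jdist V k A B"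
  unfolding jdist_def using reach_ex by (metis (mono_tags, lifting) LeastI)

lemma jdist0: "finite V \<Longrightarrow> A \<in> ksubsets V k \<Longrightarrow> B \<in> ksubsets V k \<Longrightarrow> jdist V k A B = 0 \<Longrightarrow> A = B"
  using jdist_reach by fastforce

lemma jdist_le: "(A,B) \<in> johnson_edges V k ^^ n \<Longrightarrow> jdist V k A B \<le> n"
  unfolding jdist_def by (rule Least_le)

lemma jdist1: "finite V \<Longrightarrow> 1 \<le> k \<Longrightarrow> A \<in> ksubsets V k \<Longrightarrow> B \<in> ksubsets V k \<Longrightarrow> jdist V k A B = 1 \<longleftrightarrow> (A,B) \<in> johnson_edges V k"
proof
  assume "finite V" "A \<in> ksubsets V k" "B \<in> ksubsets V k" "jdist V k A B = 1"
  then show "(A,B) \<in> johnson_edges V k" using jdist_reach by fastforce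
next
  assume f: "finite V" "1 \<le> k" "A \<in> ksubsets V k" "B \<in> ksubsets V k" and e: "(A,B) \<in> johnson_edges V k"
  have "A \<noteq> B" using e f by (auto simp: E_iff ksubsets_def)
  then have "jdist V k A B \<noteq> 0" using f jdist_reach by fastforce
  moreover have "jdist V k A B \<le> 1" using e jdist_le[where n=1] by simp
  ultimately show "jdist V k A B = 1" by simp
qed

lemma adj_decomp:
  assumes "finite V" "1 \<le> k" "(A,B) \<in> johnson_edges V k"
  shows "\<exists>a\<in>A. \<exists>b\<in>V - A. B = insert b (A - {a})"
proof -
  have k: "A \<subseteq> V" "B \<subseteq> V" "card A = k" "card B = k" "card (A \<inter> B) = k - 1"
    using assms by (auto simp: E_iff ksubsets_def)
  have fA: "finite A" "finite B" using k assms finite_subset by auto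
  have "card (A - B) = card A - card (A \<inter> B)" using fA by (simp add: card_Diff_subset_Int)
  then have "card (A - B) = 1" using k assms(2) by simp
  then obtain a where a: "A - B = {a}" using card_1_singletonE by blast
  have "card (B - A) = card B - card (B \<inter> A)" using fA by (simp add: card_Diff_subset_Int)
  then have "card (B - A) = 1" using k assms(2) by (simp add: Int_commute)
  then obtain b where b: "B - A = {b}" using card_1_singletonE by blast
  have "B = insert b (A - {a})" using a b by blast
  moreover have "a \<in> A" using a by blast
  moreover have "b \<in> V - A" using b k(2) by blast
  ultimately show ?thesis by blast
qed

lemma swap_k: "A \<in> ksubsets V k \<Longrightarrow> finite V \<Longrightarrow> a \<in> A \<Longrightarrow> b \<in> V - A \<Longrightarrow> insert b (A - {a}) \<in> ksubsets V k"
proof -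
  assume h: "A \<in> ksubsets V k" "finite V" "a \<in> A" "b \<in> V - A"
  then have f: "finite A" "card A = k" "A \<subseteq> V" by (auto simp: ksubsets_def finite_subset)
  then have "card A \<ge> 1" using h(3) by (metis One_nat_def Suc_leI card_gt_0_iff empty_iff)
  then show ?thesis using h f by (auto simp: ksubsets_def card_insert_if)
qed

lemma swap_E: "A \<in> ksubsets V k \<Longrightarrow> finite V \<Longrightarrow> a \<in> A \<Longrightarrow> b \<in> V - A \<Longrightarrow> (A, insert b (A - {a})) \<in> johnson_edges V k"
proof -
  assume h: "A \<in> ksubsets V k" "finite V" "a \<in> A" "b \<in> V - A"
  have "A \<inter> insert b (A - {a}) = A - {a}" using h by auto
  moreover have "finite A" using h by (auto simp: ksubsets_def finite_subset)
  ultimately have "card (A \<inter> insert b (A - {a})) = card A - 1" using h(3) by simp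
  then show ?thesis using h(1) swap_k[OF h] by (simp add: E_iff ksubsets_def)
qed

lemma swap_img: "bij_betw g V V \<Longrightarrow> A \<subseteq> V \<Longrightarrow> a \<in> A \<Longrightarrow> b \<in> V \<Longrightarrow> g ` insert b (A - {a}) = insert (g b) (g ` A - {g a})"
proof -
  assume h: "bij_betw g V V" "A \<subseteq> V" "a \<in> A" "b \<in> V"
  have "g ` (A - {a}) = g ` A - g ` {a}"
    by (rule inj_on_image_set_diff[of g V]) (use h in \<open>auto simp: bij_betw_def\<close>)
  then show ?thesis by simp
qed

lemma md_le: "A \<in> \<Gamma> \<Longrightarrow> B \<in> \<Gamma> \<Longrightarrow> A \<noteq> B \<Longrightarrow> min_dist V k \<Gamma> \<le> enat (jdist V k A B)"
  unfolding min_dist_def by (rule INF_lower2[of "(A,B)"]) auto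

lemma md_ge: "(\<And>A B. A \<in> \<Gamma> \<Longrightarrow> B \<in> \<Gamma> \<Longrightarrow> A \<noteq> B \<Longrightarrow> n \<le> jdist V k A B) \<Longrightarrow> enat n \<le> min_dist V k \<Gamma>"
  unfolding min_dist_def by (rule INF_greatest) (auto split: prod.splits)


definition blk :: "'a set \<Rightarrow> 'a set set \<Rightarrow> 'a \<Rightarrow> 'a set" where
  "blk V \<Gamma> x = {y \<in> V. \<forall>A\<in>\<Gamma>. x \<in> A \<longrightarrow> y \<in> A}"

locale ctx =
  fixes V :: "'a set" and k :: nat and \<Gamma> :: "'a set set" and G :: "('a \<Rightarrow> 'a) set"
  assumes fin: "finite V" and k2: "2 \<le> k" and kV: "k + 2 \<le> card V"
    and code: "is_code V k \<Gamma>"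
    and sg: "subgroup G (BijGroup V)" and stab: "stabilises_code G \<Gamma>"
begin

abbreviation "E \<equiv> johnson_edges V k"
abbreviation "KS \<equiv> ksubsets V k"

lemma GKS: "\<Gamma> \<subseteq> KS" using code by (auto simp: is_code_def)

lemma k1: "1 \<le> k" using k2 by simp

lemma KS_fin: "A \<in> KS \<Longrightarrow> finite A \<and> card A = k \<and> A \<subseteq> V"
  using fin by (auto simp: ksubsets_def intro: finite_subset)

lemma ex_out: "A \<in> KS \<Longrightarrow> \<exists>b. b \<in> V - A"
proof (rule ccontr)
  assume "A \<in> KS" "\<not> (\<exists>b. b \<in> V - A)"
  then have "V \<subseteq> A" by blast
  then have "card V \<le> card A" using KS_fin[OF \<open>A \<in> KS\<close>] card_mono by blast
  then show False using KS_fin[OF \<open>A \<in> KS\<close>] kV by simp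
qed

lemma ex_in: "A \<in> KS \<Longrightarrow> \<exists>a. a \<in> A"
proof (rule ccontr)
  assume "A \<in> KS" "\<not> (\<exists>a. a \<in> A)"
  then have "A = {}" by blast
  then show False using KS_fin[OF \<open>A \<in> KS\<close>] k2 by simp
qed

lemma g_inj: "g \<in> G \<Longrightarrow> inj_on g V" using G_bij[OF sg] by (simp add: bij_betw_def)
lemma g_V: "g \<in> G \<Longrightarrow> x \<in> V \<Longrightarrow> g x \<in> V" using G_bij[OF sg] by (meson bij_betwE)
lemma g_in_iff: "g \<in> G \<Longrightarrow> A \<subseteq> V \<Longrightarrow> x \<in> V \<Longrightarrow> g x \<in> g ` A \<longleftrightarrow> x \<in> A"
  using g_inj inj_on_image_mem_iff by metis
lemma g_out: "g \<in> G \<Longrightarrow> A \<subseteq> V \<Longrightarrow> b \<in> V - A \<Longrightarrow> g b \<in> V - g ` A"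
  using g_in_iff g_V by blast

lemma g_KS: "g \<in> G \<Longrightarrow> A \<in> KS \<Longrightarrow> g ` A \<in> KS"
proof -
  assume g: "g \<in> G" and A: "A \<in> KS"
  have "inj_on g A" by (rule inj_on_subset[OF g_inj[OF g]]) (use KS_fin[OF A] in blast)
  then have "card (g ` A) = k" using KS_fin[OF A] by (simp add: card_image)
  moreover have "g ` A \<subseteq> V" using g_V[OF g] KS_fin[OF A] by blast
  ultimately show ?thesis by (simp add: ksubsets_def)
qed

lemma GE: "(A,B) \<in> E \<Longrightarrow> (B,A) \<in> E"
proof -
  assume "(A,B) \<in> E"
  then have "A \<in> KS" "B \<in> KS" "card (A \<inter> B) = k - 1" by (simp_all add: E_iff)
  moreover have "B \<inter> A = A \<inter> B" by blast
  ultimately show ?thesis by (simp add: E_iff)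
qed

lemma gE: "g \<in> G \<Longrightarrow> (A,B) \<in> E \<Longrightarrow> (g ` A, g ` B) \<in> E"
proof -
  assume g: "g \<in> G" and e: "(A,B) \<in> E"
  from e have A: "A \<in> KS" and B: "B \<in> KS" and c: "card (A \<inter> B) = k - 1" by (simp_all add: E_iff)
  have AV: "A \<subseteq> V" using KS_fin[OF A] by simp
  have BV: "B \<subseteq> V" using KS_fin[OF B] by simp
  have i1: "g ` (A \<inter> B) = g ` A \<inter> g ` B"
    by (rule inj_on_image_Int[OF g_inj[OF g] AV BV])
  have i2: "inj_on g (A \<inter> B)" by (rule inj_on_subset[OF g_inj[OF g]]) (use AV in blast)
  have i3: "card (g ` (A \<inter> B)) = card (A \<inter> B)" using i2 by (rule card_image)
  have i4: "card (g ` A \<inter> g ` B) = k - 1" using c i1 i3 by simp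
  show ?thesis using g_KS[OF g A] g_KS[OF g B] i4 by (simp add: E_iff)
qed

lemma jd1: "A \<in> KS \<Longrightarrow> B \<in> KS \<Longrightarrow> jdist V k A B = 1 \<longleftrightarrow> (A,B) \<in> E"
  by (rule jdist1[OF fin k1])

lemma sw_KS: "A \<in> KS \<Longrightarrow> a \<in> A \<Longrightarrow> b \<in> V - A \<Longrightarrow> insert b (A - {a}) \<in> KS"
  by (rule swap_k[OF _ fin])
lemma sw_E: "A \<in> KS \<Longrightarrow> a \<in> A \<Longrightarrow> b \<in> V - A \<Longrightarrow> (A, insert b (A - {a})) \<in> E"
  by (rule swap_E[OF _ fin])
lemma sw_img: "g \<in> G \<Longrightarrow> A \<in> KS \<Longrightarrow> a \<in> A \<Longrightarrow> b \<in> V - A \<Longrightarrow> g ` insert b (A - {a}) = insert (g b) (g ` A - {g a})"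
proof -
  assume h: "g \<in> G" "A \<in> KS" "a \<in> A" "b \<in> V - A"
  show ?thesis by (rule swap_img[OF G_bij[OF sg h(1)]]) (use h KS_fin[OF h(2)] in auto)
qed

lemma adj: "(A,B) \<in> E \<Longrightarrow> \<exists>a\<in>A. \<exists>b\<in>V - A. B = insert b (A - {a})"
  by (rule adj_decomp[OF fin k1])

lemma fix_pts:
  assumes "A \<in> KS" "a \<in> A" "b \<in> V - A" "c \<in> A" "d \<in> V - A" "g \<in> G" "g ` A = A"
    and "g ` insert b (A - {a}) = insert d (A - {c})"
  shows "g a = c \<and> g b = d"
proof -
  have eq: "insert (g b) (A - {g a}) = insert d (A - {c})" using sw_img[OF assms(6,1,2,3)] assms(7,8) by simp
  have ga: "g a \<in> A" using assms(2,7) by blast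
  have AV: "A \<subseteq> V" using KS_fin[OF assms(1)] by simp
  have "g b \<in> V - g ` A" using g_out[OF assms(6) AV assms(3)] .
  then have gb: "g b \<notin> A" using assms(7) by simp
  have "c \<notin> insert d (A - {c})" using assms(4,5) by blast
  then have "c \<notin> insert (g b) (A - {g a})" using eq by simp
  then have 1: "g a = c" using assms(4) gb by blast
  have "g b \<in> insert d (A - {c})" using eq by blast
  then have "g b = d" using gb by blast
  then show ?thesis using 1 by simp
qed

lemma SIT_unf: "strongly_incidence_transitive V G \<Gamma> \<longleftrightarrow> set_transitive G \<Gamma> \<and>
     (\<forall>A \<in> \<Gamma>. \<forall>a \<in> A. \<forall>b \<in> V - A. \<forall>c \<in> A. \<forall>d \<in> V - A. \<exists>g \<in> G. g ` A = A \<and> g a = c \<and> g b = d)"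
  by (simp add: strongly_incidence_transitive_def)


lemma SIT_tr: "strongly_incidence_transitive V G \<Gamma> \<Longrightarrow> A \<in> \<Gamma> \<Longrightarrow> B \<in> \<Gamma> \<Longrightarrow> \<exists>g\<in>G. g ` A = B"
proof -
  assume "strongly_incidence_transitive V G \<Gamma>" "A \<in> \<Gamma>" "B \<in> \<Gamma>"
  then have "\<forall>A\<in>\<Gamma>. \<forall>B\<in>\<Gamma>. \<exists>g\<in>G. g ` A = B"
    by (simp add: strongly_incidence_transitive_def set_transitive_def)
  then show ?thesis using \<open>A \<in> \<Gamma>\<close> \<open>B \<in> \<Gamma>\<close> by blast
qed

lemma SIT_st: "strongly_incidence_transitive V G \<Gamma> \<Longrightarrow> A \<in> \<Gamma> \<Longrightarrow> a \<in> A \<Longrightarrow> b \<in> V - A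
   \<Longrightarrow> c \<in> A \<Longrightarrow> d \<in> V - A \<Longrightarrow> \<exists>g\<in>G. g ` A = A \<and> g a = c \<and> g b = d"
proof -
  assume h: "strongly_incidence_transitive V G \<Gamma>" "A \<in> \<Gamma>" "a \<in> A" "b \<in> V - A" "c \<in> A" "d \<in> V - A"
  then have "\<forall>A \<in> \<Gamma>. \<forall>a \<in> A. \<forall>b \<in> V - A. \<forall>c \<in> A. \<forall>d \<in> V - A. \<exists>g \<in> G. g ` A = A \<and> g a = c \<and> g b = d"
    by (simp add: strongly_incidence_transitive_def)
  from this[rule_format, OF h(2-6)] show ?thesis .
qed

lemma comp_img: "g \<in> G \<Longrightarrow> h \<in> G \<Longrightarrow> X \<subseteq> V \<Longrightarrow> compose V h g ` X = h ` g ` X"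
  by (rule compose_image)

lemma comp_pt: "x \<in> V \<Longrightarrow> compose V h g x = h (g x)"
  by (simp add: compose_def)

lemma GV: "A \<in> \<Gamma> \<Longrightarrow> A \<subseteq> V"
proof -
  assume "A \<in> \<Gamma>"
  then have "A \<in> KS" using GKS by blast
  then show ?thesis using KS_fin by simp
qed

lemma nb_all:
  assumes sit: "strongly_incidence_transitive V G \<Gamma>"
    and A: "A \<in> \<Gamma>" and a: "a \<in> A" and b: "b \<in> V - A" and B: "insert b (A - {a}) \<in> \<Gamma>"
    and x: "x \<in> A" and y: "y \<in> V - A"
  shows "insert y (A - {x}) \<in> \<Gamma>"
proof -
  obtain h where h: "h \<in> G" "h ` A = A" "h a = x" "h b = y"
    using SIT_st[OF sit A a b x y] by blast
  have AK: "A \<in> KS" using A GKS by blast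
  have "h ` insert b (A - {a}) \<in> \<Gamma>" by (rule stab_mem[OF stab h(1) B])
  moreover have "h ` insert b (A - {a}) = insert y (A - {x})"
    using sw_img[OF h(1) AK a b] h by simp
  ultimately show ?thesis by simp
qed

lemma all_in:
  assumes sit: "strongly_incidence_transitive V G \<Gamma>"
    and A: "A \<in> \<Gamma>" and e: "(A, B) \<in> E" and B: "B \<in> \<Gamma>"
  shows False
proof -
  have AK: "A \<in> KS" using A GKS by blast
  have claim: "\<And>D. D \<in> KS \<Longrightarrow> card (D - A) = m \<Longrightarrow>
      D \<in> \<Gamma> \<and> (\<exists>c\<in>D. \<exists>d\<in>V - D. insert d (D - {c}) \<in> \<Gamma>)" for m
  proof (induction m)
    case 0
    have f: "finite D" "card D = k" using KS_fin[OF 0(1)] by simp_all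
    have fA: "finite A" "card A = k" using KS_fin[OF AK] by simp_all
    have "D - A = {}" using 0(2) f by simp
    then have "D \<subseteq> A" by blast
    then have "D = A" using f fA card_subset_eq by metis
    moreover obtain a b where "a \<in> A" "b \<in> V - A" "B = insert b (A - {a})" using adj[OF e] by blast
    ultimately show ?case using A B by blast
  next
    case (Suc n)
    have f: "finite D" "card D = k" "D \<subseteq> V" using KS_fin[OF Suc.prems(1)] by simp_all
    have fA: "finite A" "card A = k" "A \<subseteq> V" using KS_fin[OF AK] by simp_all
    obtain x where x: "x \<in> D - A" using Suc.prems(2) by (metis card.empty ex_in_conv nat.distinct(1))
    have c1: "card (D - A) = card D - card (D \<inter> A)" using f by (simp add: card_Diff_subset_Int)
    have c2: "card (A - D) = card A - card (A \<inter> D)" using fA by (simp add: card_Diff_subset_Int)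
    have "A \<inter> D = D \<inter> A" by blast
    then have "card (A - D) = card (D - A)" using c1 c2 f fA by simp
    then obtain y where y: "y \<in> A - D" using Suc.prems(2) by (metis card.empty ex_in_conv nat.distinct(1))
    define D' where "D' = insert y (D - {x})"
    have xD: "x \<in> D" and yV: "y \<in> V - D" using x y fA by auto
    have D'K: "D' \<in> KS" unfolding D'_def by (rule sw_KS[OF Suc.prems(1) xD yV])
    have "D' - A = (D - A) - {x}" using x y by (auto simp: D'_def)
    then have "card (D' - A) = n" using Suc.prems(2) x f by simp
    then have IH: "D' \<in> \<Gamma> \<and> (\<exists>c\<in>D'. \<exists>d\<in>V - D'. insert d (D' - {c}) \<in> \<Gamma>)"
      using Suc.IH[OF D'K] by simp
    then obtain c d where cd: "c \<in> D'" "d \<in> V - D'" "insert d (D' - {c}) \<in> \<Gamma>" by blast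
    have yD': "y \<in> D'" and xV: "x \<in> V - D'" using x y f by (auto simp: D'_def)
    have "insert x (D' - {y}) \<in> \<Gamma>"
      by (rule nb_all[OF sit _ cd yD' xV]) (use IH in simp)
    moreover have "insert x (D' - {y}) = D" using x y by (auto simp: D'_def)
    ultimately have "D \<in> \<Gamma>" by simp
    moreover have "insert y (D - {x}) \<in> \<Gamma>" using IH by (simp add: D'_def)
    ultimately show ?case using xD yV by blast
  qed
  have "KS \<subseteq> \<Gamma>"
  proof
    fix D assume "D \<in> KS"
    then show "D \<in> \<Gamma>" using claim by blast
  qed
  then show False using code by (auto simp: is_code_def)
qed


lemma sit_md2:
  assumes sit: "strongly_incidence_transitive V G \<Gamma>"
  shows "min_dist V k \<Gamma> \<ge> 2"
proof -
  have "enat 2 \<le> min_dist V k \<Gamma>"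
  proof (rule md_ge)
    fix A B assume A: "A \<in> \<Gamma>" and B: "B \<in> \<Gamma>" and ne: "A \<noteq> B"
    have AK: "A \<in> KS" and BK: "B \<in> KS" using A B GKS by blast+
    have "jdist V k A B \<noteq> 0" using jdist0[OF fin AK BK] ne by blast
    moreover have "jdist V k A B \<noteq> 1"
    proof
      assume "jdist V k A B = 1"
      then have "(A,B) \<in> E" using jd1[OF AK BK] by simp
      then show False using all_in[OF sit A _ B] by simp
    qed
    ultimately show "2 \<le> jdist V k A B" by simp
  qed
  then show ?thesis by (simp add: numeral_eq_enat)
qed

lemma nbrsI: "B \<in> KS \<Longrightarrow> B \<notin> \<Gamma> \<Longrightarrow> A \<in> \<Gamma> \<Longrightarrow> jdist V k A B = 1 \<Longrightarrow> B \<in> neighbours V k \<Gamma>"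
  unfolding neighbours_def by blast

lemma nbrsK: "B \<in> neighbours V k \<Gamma> \<Longrightarrow> B \<in> KS"
  unfolding neighbours_def by blast

lemma IT_use:
  assumes "incidence_transitive V k G \<Gamma>"
    and "A \<in> \<Gamma>" "B \<in> neighbours V k \<Gamma>" "jdist V k A B = 1"
    and "A' \<in> \<Gamma>" "B' \<in> neighbours V k \<Gamma>" "jdist V k A' B' = 1"
  shows "\<exists>g\<in>G. g ` A = A' \<and> g ` B = B'"
proof -
  have "(A,B) \<in> {(A, B). A \<in> \<Gamma> \<and> B \<in> neighbours V k \<Gamma> \<and> jdist V k A B = 1}" using assms by simp
  moreover have "(A',B') \<in> {(A, B). A \<in> \<Gamma> \<and> B \<in> neighbours V k \<Gamma> \<and> jdist V k A B = 1}" using assms by simp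
  ultimately show ?thesis using assms(1) unfolding incidence_transitive_def Let_def by fastforce
qed

lemma sit_it:
  assumes sit: "strongly_incidence_transitive V G \<Gamma>"
  shows "incidence_transitive V k G \<Gamma>"
  unfolding incidence_transitive_def Let_def
proof (intro ballI)
  fix p q
  assume p: "p \<in> {(A, B). A \<in> \<Gamma> \<and> B \<in> neighbours V k \<Gamma> \<and> jdist V k A B = 1}"
    and q: "q \<in> {(A, B). A \<in> \<Gamma> \<and> B \<in> neighbours V k \<Gamma> \<and> jdist V k A B = 1}"
  obtain A B where pAB: "p = (A,B)" and A: "A \<in> \<Gamma>" and Bn: "B \<in> neighbours V k \<Gamma>" and d: "jdist V k A B = 1"
    using p by auto
  obtain A' B' where qAB: "q = (A',B')" and A': "A' \<in> \<Gamma>" and Bn': "B' \<in> neighbours V k \<Gamma>" and d': "jdist V k A' B' = 1"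
    using q by auto
  have AK: "A \<in> KS" and A'K: "A' \<in> KS" using A A' GKS by blast+
  have BK: "B \<in> KS" using nbrsK[OF Bn] .
  have B'K: "B' \<in> KS" using nbrsK[OF Bn'] .
  have e: "(A,B) \<in> E" using jd1[OF AK BK] d by simp
  have e': "(A',B') \<in> E" using jd1[OF A'K B'K] d' by simp
  obtain a b where a: "a \<in> A" and b: "b \<in> V - A" and Beq: "B = insert b (A - {a})" using adj[OF e] by blast
  obtain a' b' where a': "a' \<in> A'" and b': "b' \<in> V - A'" and Beq': "B' = insert b' (A' - {a'})" using adj[OF e'] by blast
  obtain g0 where g0: "g0 \<in> G" "g0 ` A = A'" using SIT_tr[OF sit A A'] by blast
  have AV: "A \<subseteq> V" using KS_fin[OF AK] by simp
  have ga: "g0 a \<in> A'" using a g0(2) by blast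
  have gb: "g0 b \<in> V - A'" using g_out[OF g0(1) AV b] g0(2) by simp
  obtain h where h: "h \<in> G" "h ` A' = A'" "h (g0 a) = a'" "h (g0 b) = b'"
    using SIT_st[OF sit A' ga gb a' b'] by blast
  define g where "g = compose V h g0"
  have gG: "g \<in> G" unfolding g_def by (rule G_comp[OF sg g0(1) h(1)])
  have BV: "B \<subseteq> V" using KS_fin[OF BK] by simp
  have "g ` A = A'" unfolding g_def using comp_img[OF g0(1) h(1) AV] g0(2) h(2) by simp
  moreover have "g ` B = B'"
  proof -
    have 1: "g ` B = h ` g0 ` B" unfolding g_def using comp_img[OF g0(1) h(1) BV] .
    have 2: "g0 ` B = insert (g0 b) (A' - {g0 a})" using sw_img[OF g0(1) AK a b] Beq g0(2) by simp
    have 3: "h ` insert (g0 b) (A' - {g0 a}) = insert b' (A' - {a'})" using sw_img[OF h(1) A'K ga gb] h by simp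
    show ?thesis using 1 2 3 Beq' by simp
  qed
  ultimately have "g ` fst p = fst q \<and> g ` snd p = snd q" using pAB qAB by simp
  then show "\<exists>g\<in>G. g ` fst p = fst q \<and> g ` snd p = snd q" using gG by blast
qed

lemma swap_P:
  assumes md: "min_dist V k \<Gamma> \<ge> 2" and A: "A \<in> \<Gamma>" and a: "a \<in> A" and b: "b \<in> V - A"
  shows "insert b (A - {a}) \<in> neighbours V k \<Gamma> \<and> jdist V k A (insert b (A - {a})) = 1"
proof -
  have AK: "A \<in> KS" using A GKS by blast
  have BK: "insert b (A - {a}) \<in> KS" by (rule sw_KS[OF AK a b])
  have d: "jdist V k A (insert b (A - {a})) = 1" using jd1[OF AK BK] sw_E[OF AK a b] by simp
  have "insert b (A - {a}) \<notin> \<Gamma>"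
  proof
    assume B: "insert b (A - {a}) \<in> \<Gamma>"
    have "A \<noteq> insert b (A - {a})" using b by blast
    then have "min_dist V k \<Gamma> \<le> enat 1" using md_le[where V=V and k=k, OF A B] d by simp
    then have "(2::enat) \<le> enat 1" using md by (rule order_trans[rotated])
    then show False by (simp add: numeral_eq_enat)
  qed
  then show ?thesis using nbrsI[OF BK _ A d] d by simp
qed

lemma it_sit:
  assumes it: "incidence_transitive V k G \<Gamma>" and md: "min_dist V k \<Gamma> \<ge> 2"
  shows "strongly_incidence_transitive V G \<Gamma>"
  unfolding SIT_unf
proof (intro conjI ballI)
  show "set_transitive G \<Gamma>" unfolding set_transitive_def
  proof (intro ballI)
    fix A A' assume A: "A \<in> \<Gamma>" and A': "A' \<in> \<Gamma>"
    have AK: "A \<in> KS" and A'K: "A' \<in> KS" using A A' GKS by blast+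
    obtain a b where "a \<in> A" "b \<in> V - A" using ex_in[OF AK] ex_out[OF AK] by blast
    then have p: "insert b (A - {a}) \<in> neighbours V k \<Gamma> \<and> jdist V k A (insert b (A - {a})) = 1"
      using swap_P[OF md A] by blast
    obtain a' b' where "a' \<in> A'" "b' \<in> V - A'" using ex_in[OF A'K] ex_out[OF A'K] by blast
    then have q: "insert b' (A' - {a'}) \<in> neighbours V k \<Gamma> \<and> jdist V k A' (insert b' (A' - {a'})) = 1"
      using swap_P[OF md A'] by blast
    show "\<exists>g\<in>G. g ` A = A'" using IT_use[OF it A _ _ A'] p q by blast
  qed
next
  fix A a b c d assume A: "A \<in> \<Gamma>" and a: "a \<in> A" and b: "b \<in> V - A" and c: "c \<in> A" and d: "d \<in> V - A"
  have AK: "A \<in> KS" using A GKS by blast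
  have p: "insert b (A - {a}) \<in> neighbours V k \<Gamma> \<and> jdist V k A (insert b (A - {a})) = 1"
    using swap_P[OF md A a b] .
  have q: "insert d (A - {c}) \<in> neighbours V k \<Gamma> \<and> jdist V k A (insert d (A - {c})) = 1"
    using swap_P[OF md A c d] .
  obtain g where g: "g \<in> G" "g ` A = A" "g ` insert b (A - {a}) = insert d (A - {c})"
    using IT_use[OF it A _ _ A] p q by blast
  have "g a = c \<and> g b = d" by (rule fix_pts[OF AK a b c d g])
  then show "\<exists>g\<in>G. g ` A = A \<and> g a = c \<and> g b = d" using g by blast
qed


lemma NT_sit:
  assumes md3: "min_dist V k \<Gamma> \<ge> 3" and nt: "neighbour_transitive V k G \<Gamma>"
  shows "strongly_incidence_transitive V G \<Gamma>"
  unfolding SIT_unf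
proof (intro conjI ballI)
  show "set_transitive G \<Gamma>" using nt by (simp add: neighbour_transitive_def)
next
  have md: "min_dist V k \<Gamma> \<ge> 2"
  proof -
    have "(2::enat) \<le> 3" by simp
    then show ?thesis using md3 by (rule order_trans)
  qed
  have stN: "\<forall>A\<in>neighbours V k \<Gamma>. \<forall>B\<in>neighbours V k \<Gamma>. \<exists>g\<in>G. g ` A = B"
    using nt by (simp add: neighbour_transitive_def set_transitive_def)
  fix A a b c d assume A: "A \<in> \<Gamma>" and a: "a \<in> A" and b: "b \<in> V - A" and c: "c \<in> A" and d: "d \<in> V - A"
  have AK: "A \<in> KS" using A GKS by blast
  have p: "insert b (A - {a}) \<in> neighbours V k \<Gamma>" using swap_P[OF md A a b] by simp
  have q: "insert d (A - {c}) \<in> neighbours V k \<Gamma>" using swap_P[OF md A c d] by simp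
  obtain g where g: "g \<in> G" "g ` insert b (A - {a}) = insert d (A - {c})"
    using stN p q by blast
  have gA: "g ` A \<in> \<Gamma>" by (rule stab_mem[OF stab g(1) A])
  have e1: "(g ` A, insert d (A - {c})) \<in> E" using gE[OF g(1) sw_E[OF AK a b]] g(2) by simp
  have e2: "(insert d (A - {c}), A) \<in> E" using GE[OF sw_E[OF AK c d]] .
  have "(A, A) \<in> E ^^ 0" by simp
  then have "(insert d (A - {c}), A) \<in> E ^^ Suc 0" by (rule relpow_Suc_I2[OF e2])
  then have "(g ` A, A) \<in> E ^^ Suc (Suc 0)" by (rule relpow_Suc_I2[OF e1])
  then have jd: "jdist V k (g ` A) A \<le> 2" using jdist_le by fastforce
  have gAA: "g ` A = A"
  proof (rule ccontr)
    assume "g ` A \<noteq> A"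
    then have "min_dist V k \<Gamma> \<le> enat (jdist V k (g ` A) A)" using md_le[where V=V and k=k, OF gA A] by simp
    also have "\<dots> \<le> enat 2" using jd by simp
    finally have "(3::enat) \<le> enat 2" using md3 by (rule order_trans[rotated])
    then show False by (simp add: numeral_eq_enat)
  qed
  have "g a = c \<and> g b = d" by (rule fix_pts[OF AK a b c d g(1) gAA g(2)])
  then show "\<exists>g\<in>G. g ` A = A \<and> g a = c \<and> g b = d" using g(1) gAA by blast
qed

lemma in_some:
  assumes tr: "perm_transitive V G" and x: "x \<in> V"
  shows "\<exists>A\<in>\<Gamma>. x \<in> A"
proof -
  obtain A0 where A0: "A0 \<in> \<Gamma>" using code by (auto simp: is_code_def)
  have A0K: "A0 \<in> KS" using A0 GKS by blast
  obtain a0 where a0: "a0 \<in> A0" using ex_in[OF A0K] by blast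
  have "a0 \<in> V" using a0 KS_fin[OF A0K] by blast
  then obtain g where g: "g \<in> G" "g a0 = x" using tr x unfolding perm_transitive_def by blast
  have "g ` A0 \<in> \<Gamma>" by (rule stab_mem[OF stab g(1) A0])
  moreover have "x \<in> g ` A0" using g a0 by blast
  ultimately show ?thesis by blast
qed

lemma blk_img:
  assumes g: "g \<in> G" and x: "x \<in> V"
  shows "g ` blk V \<Gamma> x = blk V \<Gamma> (g x)"
proof
  show "g ` blk V \<Gamma> x \<subseteq> blk V \<Gamma> (g x)"
  proof
    fix z assume "z \<in> g ` blk V \<Gamma> x"
    then obtain y where y: "y \<in> blk V \<Gamma> x" "z = g y" by blast
    have yV: "y \<in> V" using y by (simp add: blk_def)
    have "\<forall>A\<in>\<Gamma>. g x \<in> A \<longrightarrow> g y \<in> A"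
    proof (intro ballI impI)
      fix A assume A: "A \<in> \<Gamma>" and gx: "g x \<in> A"
      obtain A0 where A0: "A0 \<in> \<Gamma>" "A = g ` A0" using stab_pre[OF stab g A] by blast
      have "x \<in> A0" using gx A0 g_in_iff[OF g GV[OF A0(1)] x] by simp
      then have "y \<in> A0" using y A0 by (simp add: blk_def)
      then show "g y \<in> A" using A0 by blast
    qed
    then show "z \<in> blk V \<Gamma> (g x)" using y g_V[OF g yV] by (simp add: blk_def)
  qed
next
  show "blk V \<Gamma> (g x) \<subseteq> g ` blk V \<Gamma> x"
  proof
    fix z assume z: "z \<in> blk V \<Gamma> (g x)"
    then have zV: "z \<in> V" by (simp add: blk_def)
    have "bij_betw g V V" using G_bij[OF sg g] .
    then obtain y where y: "y \<in> V" "z = g y" using zV by (metis bij_betw_imp_surj_on imageE)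
    have "\<forall>A\<in>\<Gamma>. x \<in> A \<longrightarrow> y \<in> A"
    proof (intro ballI impI)
      fix A assume A: "A \<in> \<Gamma>" and xA: "x \<in> A"
      have gA: "g ` A \<in> \<Gamma>" by (rule stab_mem[OF stab g A])
      have "g x \<in> g ` A" using xA by blast
      then have "g y \<in> g ` A" using z gA y by (simp add: blk_def)
      then show "y \<in> A" using g_in_iff[OF g GV[OF A] y(1)] by simp
    qed
    then have "y \<in> blk V \<Gamma> x" using y by (simp add: blk_def)
    then show "z \<in> g ` blk V \<Gamma> x" using y by blast
  qed
qed

lemma blk_sub: "blk V \<Gamma> x \<subseteq> V" by (auto simp: blk_def)

lemma blk_self: "x \<in> V \<Longrightarrow> x \<in> blk V \<Gamma> x" by (auto simp: blk_def)

lemma blk_card: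
  assumes g: "g \<in> G" and x: "x \<in> V"
  shows "card (blk V \<Gamma> (g x)) = card (blk V \<Gamma> x)"
proof -
  have "inj_on g (blk V \<Gamma> x)" by (rule inj_on_subset[OF g_inj[OF g] blk_sub])
  then have "card (g ` blk V \<Gamma> x) = card (blk V \<Gamma> x)" by (rule card_image)
  then show ?thesis using blk_img[OF g x] by simp
qed

lemma blk_eq:
  assumes tr: "perm_transitive V G" and x: "x \<in> V" and y: "y \<in> blk V \<Gamma> x"
  shows "blk V \<Gamma> y = blk V \<Gamma> x"
proof -
  have yV: "y \<in> V" using y by (simp add: blk_def)
  obtain g where g: "g \<in> G" "g x = y" using tr x yV unfolding perm_transitive_def by blast
  have c: "card (blk V \<Gamma> y) = card (blk V \<Gamma> x)" using blk_card[OF g(1) x] g(2) by simp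
  have sub: "blk V \<Gamma> y \<subseteq> blk V \<Gamma> x" using y by (auto simp: blk_def)
  have "finite (blk V \<Gamma> x)" using fin blk_sub finite_subset by metis
  then show ?thesis using card_subset_eq[OF _ sub c] by simp
qed

lemma blk_single:
  assumes pr: "primitive V G" and x: "x \<in> V"
  shows "blk V \<Gamma> x = {x}"
proof -
  have tr: "perm_transitive V G" using pr by (simp add: primitive_def)
  have blockish: "\<forall>g\<in>G. g ` blk V \<Gamma> x = blk V \<Gamma> x \<or> g ` blk V \<Gamma> x \<inter> blk V \<Gamma> x = {}"
  proof
    fix g assume g: "g \<in> G"
    show "g ` blk V \<Gamma> x = blk V \<Gamma> x \<or> g ` blk V \<Gamma> x \<inter> blk V \<Gamma> x = {}"
    proof (cases "g ` blk V \<Gamma> x \<inter> blk V \<Gamma> x = {}")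
      case False
      then obtain z where z: "z \<in> blk V \<Gamma> (g x)" "z \<in> blk V \<Gamma> x" using blk_img[OF g x] by blast
      have "blk V \<Gamma> z = blk V \<Gamma> (g x)" by (rule blk_eq[OF tr g_V[OF g x] z(1)])
      moreover have "blk V \<Gamma> z = blk V \<Gamma> x" by (rule blk_eq[OF tr x z(2)])
      ultimately show ?thesis using blk_img[OF g x] by simp
    qed simp
  qed
  have ne: "blk V \<Gamma> x \<noteq> {}" using blk_self[OF x] by blast
  have "card (blk V \<Gamma> x) = 1 \<or> blk V \<Gamma> x = V"
    using pr blk_sub ne blockish unfolding primitive_def by blast
  moreover have "blk V \<Gamma> x \<noteq> V"
  proof
    assume eq: "blk V \<Gamma> x = V"
    obtain A where A: "A \<in> \<Gamma>" "x \<in> A" using in_some[OF tr x] by blast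
    have AK: "A \<in> KS" using A GKS by blast
    obtain y where y: "y \<in> V - A" using ex_out[OF AK] by blast
    then have "y \<in> blk V \<Gamma> x" using eq by simp
    then have "y \<in> A" using A by (simp add: blk_def)
    then show False using y by simp
  qed
  ultimately have "card (blk V \<Gamma> x) = 1" by simp
  then obtain z where "blk V \<Gamma> x = {z}" using card_1_singletonE by blast
  then show ?thesis using blk_self[OF x] by simp
qed

lemma sep:
  assumes pr: "primitive V G" and x: "x \<in> V" and y: "y \<in> V" and ne: "x \<noteq> y"
  shows "\<exists>A\<in>\<Gamma>. x \<in> A \<and> y \<notin> A"
proof (rule ccontr)
  assume "\<not> ?thesis"
  then have "y \<in> blk V \<Gamma> x" using y by (auto simp: blk_def)
  then show False using blk_single[OF pr x] ne by simp
qed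

lemma part_c:
  assumes pr: "primitive V G" and sit: "strongly_incidence_transitive V G \<Gamma>"
  shows "two_transitive V G"
  unfolding two_transitive_def
proof (intro ballI impI)
  fix a b c d assume a: "a \<in> V" and b: "b \<in> V" and c: "c \<in> V" and d: "d \<in> V"
    and ab: "a \<noteq> b" and cd: "c \<noteq> d"
  obtain A where A: "A \<in> \<Gamma>" "a \<in> A" "b \<notin> A" using sep[OF pr a b ab] by blast
  obtain A' where A': "A' \<in> \<Gamma>" "c \<in> A'" "d \<notin> A'" using sep[OF pr c d cd] by blast
  obtain g0 where g0: "g0 \<in> G" "g0 ` A = A'" using SIT_tr[OF sit A(1) A'(1)] by blast
  have ga: "g0 a \<in> A'" using A(2) g0(2) by blast
  have bA: "b \<in> V - A" using A b by blast
  have gb: "g0 b \<in> V - A'" using g_out[OF g0(1) GV[OF A(1)] bA] g0(2) by simp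
  have dA: "d \<in> V - A'" using A' d by blast
  obtain h where h: "h \<in> G" "h (g0 a) = c" "h (g0 b) = d"
    using SIT_st[OF sit A'(1) ga gb A'(2) dA] by blast
  have "compose V h g0 \<in> G" by (rule G_comp[OF sg g0(1) h(1)])
  moreover have "compose V h g0 a = c" using comp_pt[OF a, of h g0] h(2) by simp
  moreover have "compose V h g0 b = d" using comp_pt[OF b, of h g0] h(3) by simp
  ultimately show "\<exists>g\<in>G. g a = c \<and> g b = d" by blast
qed

end

theorem theorem1p3:
  fixes V :: "'a set" and k :: nat and \<Gamma> :: "'a set set" and G :: "('a \<Rightarrow> 'a) set"
  assumes "finite V" and "2 \<le> k" and "k + 2 \<le> card V"
    and "is_code V k \<Gamma>"
    and "subgroup G (BijGroup V)" and "stabilises_code G \<Gamma>"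
  shows "(strongly_incidence_transitive V G \<Gamma> \<longleftrightarrow>
              incidence_transitive V k G \<Gamma> \<and> min_dist V k \<Gamma> \<ge> 2)
         \<and> (min_dist V k \<Gamma> \<ge> 3 \<longrightarrow> neighbour_transitive V k G \<Gamma> \<longrightarrow>
              strongly_incidence_transitive V G \<Gamma>)
         \<and> (primitive V G \<longrightarrow> strongly_incidence_transitive V G \<Gamma> \<longrightarrow> two_transitive V G)"
proof -
  interpret c: ctx V k \<Gamma> G using assms by (simp add: ctx_def)
  have 1: "strongly_incidence_transitive V G \<Gamma> \<longleftrightarrow>
              incidence_transitive V k G \<Gamma> \<and> min_dist V k \<Gamma> \<ge> 2"
    using c.sit_md2 c.sit_it c.it_sit by blast
  have 2: "min_dist V k \<Gamma> \<ge> 3 \<longrightarrow> neighbour_transitive V k G \<Gamma> \<longrightarrow>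
              strongly_incidence_transitive V G \<Gamma>"
    using c.NT_sit by blast
  have 3: "primitive V G \<longrightarrow> strongly_incidence_transitive V G \<Gamma> \<longrightarrow> two_transitive V G"
    using c.part_c by blast
  show ?thesis using 1 2 3 by blast
qed

end
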